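(* Let $s_1\in\mathbb{Q}$ with $0<s_1<1$ and put $u_1=\frac{1-s_1^2}{2s_1}$. Let $m\in\mathbb{Q}$ with $0<m<\sqrt2-1$, and let $\alpha\in(0,\pi/4)$ be the angle with generator $m$, so that $\cos\alpha=\frac{1-m^2}{1+m^2}$ and $\sin\alpha=\frac{2m}{1+m^2}$. Write $\omega_\pm=\omega_\pm(\alpha)=\cos\alpha\pm\sin\alpha$. (a) For nonzero real numbers $s_2,s_3,s_4$, with $Q=s_3s_4$, the system $$s_2s_3=\omega_-,\qquad s_2s_3=Q\,\omega_+,\qquad s_2\,\omega_+=2u_1\,\omega_-+s_4$$ holds if and only if $$s_2=2u_1\cot(2\alpha),\qquad s_3=\frac{\omega_-}{s_2},\qquad s_4=\frac{s_2}{\omega_+}.$$ (b) Let $s_2,s_3,s_4$ be given by these formulas, and suppose $0<s_k<1$ for $k=2,3,4$. Put $u_k=\frac{1-s_k^2}{2s_k}$ and $v_k=\frac{1+s_k^2}{2s_k}$ for $k=1,2,3,4$. Then all $u_k,v_k$ are positive rational numbers satisfying $$1+u_k^2=v_k^2\ (k=1,2,3,4),\qquad 2u_1^2+2u_2^2=u_3^2+u_4^2 .$$ Consequently, writing $x$ for a common denominator and $y=xu_1$, $z=xu_2$, $c_1=xu_3$, $c_2=xu_4$, $a=xv_1$, $b=xv_2$, $d_1=xv_3$, $d_2=xv_4$, the numbers satisfy $x^2+y^2=a^2$, $x^2+z^2=b^2$, $x^2+c_1^2=d_1^2$, $x^2+c_2^2=d_2^2$, $2y^2+2z^2=c_1^2+c_2^2$,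 i.e. they form a rational (after scaling, perfect) leaning box.
   Context: The generator of an angle $\theta$ is $m(\theta)=\frac{\sin\theta}{1+\cos\theta}=\tan(\theta/2)$. A leaning box is a parallelepiped with edges $x,y,z$ whose faces spanned by $(x,y)$ and $(x,z)$ are rectangles (diagonals $a$, $b$) and whose face spanned by $(y,z)$ is a parallelogram with diagonals $c_1,c_2$; its two distinct body diagonals are $d_1,d_2$. It is perfect if all nine quantities are positive integers. *)

theory Defs
  imports Complex_Main
begin

text \<open>Generator of an angle: m(theta) = sin theta / (1 + cos theta) = tan(theta/2).\<close>
definition generator :: "real \<Rightarrow> real" where
  "generator \<theta> = sin \<theta> / (1 + cos \<theta>)"

definition omega_p :: "real \<Rightarrow> real" where
  "omega_p \<alpha> = cos \<alpha> + sin \<alpha>"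

definition omega_m :: "real \<Rightarrow> real" where
  "omega_m \<alpha> = cos \<alpha> - sin \<alpha>"

definition uf :: "real \<Rightarrow> real" where
  "uf s = (1 - s^2) / (2 * s)"

definition vf :: "real \<Rightarrow> real" where
  "vf s = (1 + s^2) / (2 * s)"

end

theory Submission imports Defs begin
lemma common_den:
  "\<forall>q\<in>set qs. q \<in> \<rat> \<Longrightarrow> \<exists>x::nat. x>0 \<and> (\<forall>q\<in>set qs. real x * q \<in> \<int>)"
proof (induction qs)
  case Nil then show ?case by (intro exI[of _ 1]) auto
next
  case (Cons q qs)
  then obtain x where x: "x>0" "\<forall>q\<in>set qs. real x * q \<in> \<int>" by auto
  from Cons.prems have "q \<in> \<rat>" by auto
  then obtain a b :: int where ab: "q = of_int a / of_int b" "b > 0" by (rule Rats_cases') 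
  have "real (x * nat b) * q = of_int (int x * a)" using ab by (simp add: field_simps)
  moreover have "real (x * nat b) * q' \<in> \<int>" if "q'\<in>set qs" for q'
  proof -
    have "real (x * nat b) * q' = of_int b * (real x * q')" using ab by simp
    moreover have "real x * q' \<in> \<int>" using x that by auto
    ultimately show ?thesis by (metis Ints_mult Ints_of_int)
  qed
  ultimately show ?case using x ab by (intro exI[of _ "x * nat b"]) auto
qed

lemma uv_facts:
  fixes q :: real assumes "q \<in> \<rat>" "0<q" "q<1"
  shows "uf q \<in> \<rat> \<and> 0 < uf q \<and> vf q \<in> \<rat> \<and> 0 < vf q \<and> 1 + (uf q)^2 = (vf q)^2"
proof -
  have h1: "q*q < 1" using assms mult_strict_mono[of q 1 q 1] by simp
  have h2: "0 < 1 + q*q" using assms by (simp add: add_pos_nonneg)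
  show ?thesis using assms h1 h2 unfolding uf_def vf_def
    by (auto simp: field_simps power2_eq_square intro!: Rats_divide Rats_diff Rats_add Rats_mult)
qed

lemma cot2: "cot (2*a) = ((cos a)^2 - (sin a)^2) / (2 * sin a * cos a)"
  by (simp add: cot_def cos_double sin_double)

lemma ident:
  fixes wp wm s2 u :: real
  assumes "wp \<noteq> 0" "wm \<noteq> 0" "s2 \<noteq> 0" "wp^2+wm^2 = 2" "s2*(wp^2-1) = 2*u*wm*wp"
  shows "2*u^2 + 2*(uf s2)^2 = (uf (wm/s2))^2 + (uf (s2/wp))^2"
proof -
  have u: "u = s2*(wp^2-1)/(2*wm*wp)" using assms by (simp add: field_simps)
  show ?thesis using assms unfolding u uf_def
    apply (simp add: field_simps power2_eq_square)
    apply algebra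
    done
qed

theorem theorem1:
  fixes s1 m \<alpha> :: real
  assumes s1_rat: "s1 \<in> \<rat>" and s1_pos: "0 < s1" and s1_lt: "s1 < 1"
    and m_rat: "m \<in> \<rat>" and m_pos: "0 < m" and m_lt: "m < sqrt 2 - 1"
    and alpha_pos: "0 < \<alpha>" and alpha_lt: "\<alpha> < pi / 4"
    and alpha_gen: "generator \<alpha> = m"
  shows
    "(\<forall>s2 s3 s4 :: real. s2 \<noteq> 0 \<longrightarrow> s3 \<noteq> 0 \<longrightarrow> s4 \<noteq> 0 \<longrightarrow>
       ((s2 * s3 = omega_m \<alpha> \<and> s2 * s3 = (s3 * s4) * omega_p \<alpha> \<and>
         s2 * omega_p \<alpha> = 2 * uf s1 * omega_m \<alpha> + s4)
        \<longleftrightarrow>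
        (s2 = 2 * uf s1 * cot (2 * \<alpha>) \<and> s3 = omega_m \<alpha> / s2 \<and> s4 = s2 / omega_p \<alpha>))) \<and>
    (let s2 = 2 * uf s1 * cot (2 * \<alpha>);
         s3 = omega_m \<alpha> / s2;
         s4 = s2 / omega_p \<alpha>;
         s = [s1, s2, s3, s4]
     in (0 < s2 \<and> s2 < 1 \<and> 0 < s3 \<and> s3 < 1 \<and> 0 < s4 \<and> s4 < 1) \<longrightarrow>
        ((\<forall>k < 4. uf (s ! k) \<in> \<rat> \<and> 0 < uf (s ! k) \<and>
                   vf (s ! k) \<in> \<rat> \<and> 0 < vf (s ! k) \<and>
                   1 + (uf (s ! k))^2 = (vf (s ! k))^2) \<and>
         2 * (uf s1)^2 + 2 * (uf s2)^2 = (uf s3)^2 + (uf s4)^2 \<and>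
         (\<exists>x :: nat. x > 0 \<and>
            (\<forall>k < 4. real x * uf (s ! k) \<in> \<int> \<and> real x * vf (s ! k) \<in> \<int>) \<and>
            (let y = real x * uf s1; z = real x * uf s2;
                 c1 = real x * uf s3; c2 = real x * uf s4;
                 a = real x * vf s1; b = real x * vf s2;
                 d1 = real x * vf s3; d2 = real x * vf s4
             in (real x)^2 + y^2 = a^2 \<and> (real x)^2 + z^2 = b^2 \<and>
                (real x)^2 + c1^2 = d1^2 \<and> (real x)^2 + c2^2 = d2^2 \<and>
                2 * y^2 + 2 * z^2 = c1^2 + c2^2))))"
proof -
  define c where "c = cos \<alpha>"
  define sn where "sn = sin \<alpha>"
  define u1 where "u1 = uf s1"
  have sn_pos: "sn > 0" unfolding sn_def using alpha_pos alpha_lt pi_gt_zero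
    by (intro sin_gt_zero) auto
  have c_pos: "c > 0" unfolding c_def using alpha_pos alpha_lt pi_gt_zero
    by (intro cos_gt_zero_pi) auto
  have pyth: "sn^2 + c^2 = 1" unfolding sn_def c_def by simp
  have gen: "m * (1 + c) = sn" using alpha_gen c_pos
    unfolding generator_def c_def sn_def by (simp add: field_simps)
  have "m^2 * (1+c)^2 = sn^2" using gen by (metis power_mult_distrib)
  also have "\<dots> = (1-c)*(1+c)" using pyth by (simp add: algebra_simps power2_eq_square)
  finally have "(m^2 * (1+c)) * (1+c) = (1-c)*(1+c)" by (simp add: power2_eq_square mult.assoc)
  hence h: "m^2 * (1+c) = 1 - c" using c_pos by simp
  have "c * (1 + m^2) = 1 - m^2" using h by (simp add: algebra_simps)
  moreover have "1 + m^2 > 0" by (simp add: add_pos_nonneg)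
  ultimately have c_eq: "c = (1 - m^2)/(1+m^2)" by (simp add: field_simps)
  have c_rat: "c \<in> \<rat>" using c_eq m_rat by simp
  have sn_rat: "sn \<in> \<rat>" using gen c_rat m_rat by (metis Rats_1 Rats_add Rats_mult)
  have u1_rat: "u1 \<in> \<rat>" using uv_facts[OF s1_rat s1_pos s1_lt] u1_def by simp
  have wp: "omega_p \<alpha> = c + sn" unfolding omega_p_def c_def sn_def by simp
  have wm: "omega_m \<alpha> = c - sn" unfolding omega_m_def c_def sn_def by simp
  have wp_pos: "c + sn > 0" using c_pos sn_pos by simp
  have ct: "cot (2*\<alpha>) = (c^2 - sn^2)/(2*sn*c)" unfolding c_def sn_def by (rule cot2)
  have key: "s2 * ((c+sn)^2 - 1) = 2*u1*(c-sn)*(c+sn) \<longleftrightarrow> s2 = 2*u1*((c^2 - sn^2)/(2*sn*c))" for s2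
  proof -
    have e1: "(c+sn)^2 - 1 = 2*sn*c" using pyth by (simp add: power2_eq_square algebra_simps)
    have e2: "2*u1*(c-sn)*(c+sn) = 2*u1*(c^2 - sn^2)" by (simp add: power2_eq_square algebra_simps)
    have "s2 * (2*sn*c) = 2*u1*(c^2 - sn^2) \<longleftrightarrow> s2 = 2*u1*((c^2 - sn^2)/(2*sn*c))"
      using sn_pos c_pos by (auto simp: field_simps)
    thus ?thesis unfolding e1 e2 .
  qed
  have partA: "(s2 * s3 = c - sn \<and> s2 * s3 = (s3 * s4) * (c+sn) \<and>
         s2 * (c+sn) = 2 * u1 * (c-sn) + s4)
        \<longleftrightarrow>
        (s2 = 2 * u1 * ((c^2 - sn^2)/(2*sn*c)) \<and> s3 = (c-sn) / s2 \<and> s4 = s2 / (c+sn))"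
    if "s2 \<noteq> 0" "s3 \<noteq> 0" "s4 \<noteq> 0" for s2 s3 s4
  proof
    assume h: "s2 * s3 = c - sn \<and> s2 * s3 = (s3 * s4) * (c+sn) \<and> s2 * (c+sn) = 2 * u1 * (c-sn) + s4"
    have "s3 * s2 = s3 * (s4*(c+sn))" using h by (metis mult.commute mult.assoc)
    hence "s2 = s4*(c+sn)" using that by simp
    hence s4: "s4 = s2/(c+sn)" using wp_pos by (simp add: field_simps)
    have "s2 * ((c+sn)^2 - 1) = 2*u1*(c-sn)*(c+sn)" using h s4 wp_pos
      by (simp add: field_simps power2_eq_square)
    hence e: "s2 = 2*u1*((c^2 - sn^2)/(2*sn*c))" using key by blast
    have "s3 = (c-sn)/s2" using h that by (simp add: field_simps mult.commute)
    thus "s2 = 2 * u1 * ((c^2 - sn^2)/(2*sn*c)) \<and> s3 = (c-sn) / s2 \<and> s4 = s2 / (c+sn)"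
      using e s4 by blast
  next
    assume h: "s2 = 2 * u1 * ((c^2 - sn^2)/(2*sn*c)) \<and> s3 = (c-sn) / s2 \<and> s4 = s2 / (c+sn)"
    hence K: "s2 * ((c+sn)^2 - 1) = 2*u1*(c-sn)*(c+sn)" using key by blast
    have s4e: "s4*(c+sn) = s2" using h wp_pos by simp
    have s3e: "s2 * s3 = c - sn" using h that by simp
    have "(s2*(c+sn))*(c+sn) = s2 * ((c+sn)^2 - 1) + s2" by (simp add: algebra_simps power2_eq_square)
    also have "\<dots> = 2*u1*(c-sn)*(c+sn) + s4*(c+sn)" using K s4e by simp
    also have "\<dots> = (2*u1*(c-sn) + s4)*(c+sn)" by (simp add: algebra_simps)
    finally have "s2 * (c+sn) = 2 * u1 * (c-sn) + s4" using wp_pos by simp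
    moreover have "s2 * s3 = (s3 * s4) * (c+sn)" using s4e by (metis mult.commute mult.assoc)
    ultimately show "s2 * s3 = c - sn \<and> s2 * s3 = (s3 * s4) * (c+sn) \<and> s2 * (c+sn) = 2 * u1 * (c-sn) + s4"
      using s3e by blast
  qed
  show ?thesis
  proof (intro conjI)
    show "\<forall>s2 s3 s4 :: real. s2 \<noteq> 0 \<longrightarrow> s3 \<noteq> 0 \<longrightarrow> s4 \<noteq> 0 \<longrightarrow>
       ((s2 * s3 = omega_m \<alpha> \<and> s2 * s3 = (s3 * s4) * omega_p \<alpha> \<and>
         s2 * omega_p \<alpha> = 2 * uf s1 * omega_m \<alpha> + s4)
        \<longleftrightarrow>
        (s2 = 2 * uf s1 * cot (2 * \<alpha>) \<and> s3 = omega_m \<alpha> / s2 \<and> s4 = s2 / omega_p \<alpha>))"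
      using partA unfolding wp wm ct u1_def by blast
  next
    show "let s2 = 2 * uf s1 * cot (2 * \<alpha>);
         s3 = omega_m \<alpha> / s2;
         s4 = s2 / omega_p \<alpha>;
         s = [s1, s2, s3, s4]
     in (0 < s2 \<and> s2 < 1 \<and> 0 < s3 \<and> s3 < 1 \<and> 0 < s4 \<and> s4 < 1) \<longrightarrow>
        ((\<forall>k < 4. uf (s ! k) \<in> \<rat> \<and> 0 < uf (s ! k) \<and>
                   vf (s ! k) \<in> \<rat> \<and> 0 < vf (s ! k) \<and>
                   1 + (uf (s ! k))^2 = (vf (s ! k))^2) \<and>
         2 * (uf s1)^2 + 2 * (uf s2)^2 = (uf s3)^2 + (uf s4)^2 \<and>
         (\<exists>x :: nat. x > 0 \<and>
            (\<forall>k < 4. real x * uf (s ! k) \<in> \<int> \<and> real x * vf (s ! k) \<in> \<int>) \<and>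
            (let y = real x * uf s1; z = real x * uf s2;
                 c1 = real x * uf s3; c2 = real x * uf s4;
                 a = real x * vf s1; b = real x * vf s2;
                 d1 = real x * vf s3; d2 = real x * vf s4
             in (real x)^2 + y^2 = a^2 \<and> (real x)^2 + z^2 = b^2 \<and>
                (real x)^2 + c1^2 = d1^2 \<and> (real x)^2 + c2^2 = d2^2 \<and>
                2 * y^2 + 2 * z^2 = c1^2 + c2^2)))"
      unfolding Let_def wp wm ct u1_def[symmetric]
    proof (intro impI)
      define s2 where "s2 = 2 * u1 * ((c^2 - sn^2)/(2*sn*c))"
      define s3 where "s3 = (c-sn)/s2"
      define s4 where "s4 = s2/(c+sn)"
      assume "0 < 2 * u1 * ((c^2 - sn^2)/(2*sn*c)) \<and> 2 * u1 * ((c^2 - sn^2)/(2*sn*c)) < 1 \<and>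
        0 < (c - sn) / (2 * u1 * ((c^2 - sn^2)/(2*sn*c))) \<and> (c - sn) / (2 * u1 * ((c^2 - sn^2)/(2*sn*c))) < 1 \<and>
        0 < 2 * u1 * ((c^2 - sn^2)/(2*sn*c)) / (c + sn) \<and> 2 * u1 * ((c^2 - sn^2)/(2*sn*c)) / (c + sn) < 1"
      hence b: "0 < s2" "s2 < 1" "0 < s3" "s3 < 1" "0 < s4" "s4 < 1"
        unfolding s2_def s3_def s4_def by auto
      have r2: "s2 \<in> \<rat>" unfolding s2_def using u1_rat c_rat sn_rat by simp
      have r3: "s3 \<in> \<rat>" unfolding s3_def using r2 c_rat sn_rat by simp
      have r4: "s4 \<in> \<rat>" unfolding s4_def using r2 c_rat sn_rat by simp
      note f1 = uv_facts[OF s1_rat s1_pos s1_lt]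
      note f2 = uv_facts[OF r2 b(1,2)]
      note f3 = uv_facts[OF r3 b(3,4)]
      note f4 = uv_facts[OF r4 b(5,6)]
      have all: "\<forall>k < 4. uf ([s1,s2,s3,s4] ! k) \<in> \<rat> \<and> 0 < uf ([s1,s2,s3,s4] ! k) \<and>
                   vf ([s1,s2,s3,s4] ! k) \<in> \<rat> \<and> 0 < vf ([s1,s2,s3,s4] ! k) \<and>
                   1 + (uf ([s1,s2,s3,s4] ! k))^2 = (vf ([s1,s2,s3,s4] ! k))^2"
      proof (intro allI impI)
        fix k :: nat assume "k < 4"
        hence "k = 0 \<or> k = 1 \<or> k = 2 \<or> k = 3" by auto
        thus "uf ([s1,s2,s3,s4] ! k) \<in> \<rat> \<and> 0 < uf ([s1,s2,s3,s4] ! k) \<and>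
                   vf ([s1,s2,s3,s4] ! k) \<in> \<rat> \<and> 0 < vf ([s1,s2,s3,s4] ! k) \<and>
                   1 + (uf ([s1,s2,s3,s4] ! k))^2 = (vf ([s1,s2,s3,s4] ! k))^2"
          using f1 f2 f3 f4 by auto
      qed
      have sumid: "2 * u1^2 + 2 * (uf s2)^2 = (uf s3)^2 + (uf s4)^2"
        unfolding s3_def s4_def
      proof (rule ident)
        show "c + sn \<noteq> 0" using wp_pos by simp
        show "c - sn \<noteq> 0" using b(3) unfolding s3_def by auto
        show "s2 \<noteq> 0" using b by simp
        show "(c + sn)^2 + (c - sn)^2 = 2" using pyth by (simp add: power2_eq_square algebra_simps)
        show "s2 * ((c + sn)^2 - 1) = 2 * u1 * (c - sn) * (c + sn)" using key s2_def by blast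
      qed
      obtain x :: nat where x: "x > 0" "\<forall>q\<in>set [uf s1, uf s2, uf s3, uf s4, vf s1, vf s2, vf s3, vf s4]. real x * q \<in> \<int>"
        using common_den[of "[uf s1, uf s2, uf s3, uf s4, vf s1, vf s2, vf s3, vf s4]"] f1 f2 f3 f4 by auto
      have xint: "\<forall>k < 4. real x * uf ([s1,s2,s3,s4] ! k) \<in> \<int> \<and> real x * vf ([s1,s2,s3,s4] ! k) \<in> \<int>"
      proof (intro allI impI)
        fix k :: nat assume "k < 4"
        hence "k = 0 \<or> k = 1 \<or> k = 2 \<or> k = 3" by auto
        thus "real x * uf ([s1,s2,s3,s4] ! k) \<in> \<int> \<and> real x * vf ([s1,s2,s3,s4] ! k) \<in> \<int>"
          using x(2) by auto
      qed
      have pe: "(real x)^2 + (real x * uf q)^2 = (real x * vf q)^2" if "1 + (uf q)^2 = (vf q)^2" for q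
      proof -
        have "(real x)^2 + (real x * uf q)^2 = (real x)^2 * (1 + (uf q)^2)" by (simp add: algebra_simps power_mult_distrib)
        also have "\<dots> = (real x * vf q)^2" using that by (simp add: power_mult_distrib)
        finally show ?thesis .
      qed
      have se: "2 * (real x * u1)^2 + 2 * (real x * uf s2)^2 = (real x * uf s3)^2 + (real x * uf s4)^2"
      proof -
        have "2 * (real x * u1)^2 + 2 * (real x * uf s2)^2 = (real x)^2 * (2 * u1^2 + 2 * (uf s2)^2)"
          by (simp add: algebra_simps power_mult_distrib)
        also have "\<dots> = (real x)^2 * ((uf s3)^2 + (uf s4)^2)" using sumid by simp
        also have "\<dots> = (real x * uf s3)^2 + (real x * uf s4)^2" by (simp add: algebra_simps power_mult_distrib)
        finally show ?thesis .
      qed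
      show "(\<forall>k < 4. uf ([s1,s2,s3,s4] ! k) \<in> \<rat> \<and> 0 < uf ([s1,s2,s3,s4] ! k) \<and>
                   vf ([s1,s2,s3,s4] ! k) \<in> \<rat> \<and> 0 < vf ([s1,s2,s3,s4] ! k) \<and>
                   1 + (uf ([s1,s2,s3,s4] ! k))^2 = (vf ([s1,s2,s3,s4] ! k))^2) \<and>
         2 * u1^2 + 2 * (uf s2)^2 = (uf s3)^2 + (uf s4)^2 \<and>
         (\<exists>x :: nat. x > 0 \<and>
            (\<forall>k < 4. real x * uf ([s1,s2,s3,s4] ! k) \<in> \<int> \<and> real x * vf ([s1,s2,s3,s4] ! k) \<in> \<int>) \<and>
             (real x)^2 + (real x * u1)^2 = (real x * vf s1)^2 \<and> (real x)^2 + (real x * uf s2)^2 = (real x * vf s2)^2 \<and>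
                (real x)^2 + (real x * uf s3)^2 = (real x * vf s3)^2 \<and> (real x)^2 + (real x * uf s4)^2 = (real x * vf s4)^2 \<and>
                2 * (real x * u1)^2 + 2 * (real x * uf s2)^2 = (real x * uf s3)^2 + (real x * uf s4)^2)"
        unfolding s2_def[symmetric] s3_def[symmetric] s4_def[symmetric]
        using all sumid x(1) xint pe se f1 f2 f3 f4 u1_def by blast
    qed
  qed
qed
end
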